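(* For positive integers $b,c$ with $1\le b<b+2\le c$, $$\frac{c+1}{c-b}\le\sum_{t=0}^\infty\frac{(b+t)!\,c!}{(c+t)!\,b!}\le\frac{c+1}{c-b}\bigl(1+\varepsilon(c-b)\bigr),$$ where $\varepsilon(a)=3\,\dfrac{1+\ln a}{a}+4e^{1/12}\,2^{-a/2}$. *)

theory Defs
  imports Complex_Main
begin

definition eps :: "real \<Rightarrow> real" where
  "eps a = 3 * (1 + ln a) / a + 4 * exp (1/12) * 2 powr (- a / 2)"

end

theory Submission
  imports Defs
begin

lemma aux_cancel: "(x::real) > 0 \<Longrightarrow> x * (A / (x * F * B)) / K = A / (F * B * K)"
  by (simp add: mult.assoc)

lemma aux_cancel2: "(G::real) \<noteq> 0 \<Longrightarrow> y \<noteq> 0 \<Longrightarrow> B \<noteq> 0 \<Longrightarrow> K \<noteq> 0 \<Longrightarrow>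
   G * A / (y * G * B * K) = A / (B * K) / y"
  by (simp add: field_simps)

theorem lemma2:
  fixes b c :: nat
  assumes "1 \<le> b" and "b + 2 \<le> c"
  defines "f \<equiv> (\<lambda>t::nat. (fact (b + t) * fact c) / (fact (c + t) * fact b) :: real)"
  shows "summable f \<and>
         (real c + 1) / (real c - real b) \<le> (\<Sum>t. f t) \<and>
         (\<Sum>t. f t) \<le> (real c + 1) / (real c - real b) * (1 + eps (real c - real b))"
proof -
  obtain d where cd: "c = b + 2 + d" using assms(2) le_Suc_ex by blast
  define K :: real where "K = real d + 1"
  have Kpos: "K > 0" unfolding K_def by simp
  define h where "h t = (real c + real t) * f t / K" for t
  have fpos: "f t > 0" for t unfolding f_def by simp
  have step: "f (Suc t) = f t * (real b + real t + 1) / (real c + real t + 1)" for t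
  proof -
    have "fact (b + Suc t) = (real b + real t + 1) * (fact (b + t) :: real)"
      by (simp add: fact_Suc algebra_simps)
    moreover have "fact (c + Suc t) = (real c + real t + 1) * (fact (c + t) :: real)"
      by (simp add: fact_Suc algebra_simps)
    ultimately show ?thesis unfolding f_def by (simp add: field_simps)
  qed
  have tel: "f t = h t - h (Suc t)" for t
  proof -
    have "h t - h (Suc t) = ((real c + real t) * f t - (real c + real t + 1) * f (Suc t)) / K"
      unfolding h_def by (simp add: diff_divide_distrib algebra_simps)
    also have "(real c + real t + 1) * f (Suc t) = f t * (real b + real t + 1)"
      unfolding step by (simp add: field_simps)
    also have "(real c + real t) * f t - f t * (real b + real t + 1) = f t * K"
      unfolding K_def cd by (simp add: algebra_simps)
    finally show ?thesis using Kpos by simp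
  qed
  define C :: real where "C = fact c / (fact b * K)"
  have hbound: "h t \<le> C / (real t + 1)" for t
  proof -
    have f1: "(fact (c + t) :: real) = (real c + real t) * fact (b + t + 1 + d)"
    proof -
      have "c + t = Suc (b + t + 1 + d)" using cd by simp
      then show ?thesis by (simp only: fact_Suc) (simp add: cd algebra_simps)
    qed
    have f2: "(fact (b + t + 1 + d) :: real) \<ge> (real b + real t + 1) * fact (b + t)"
    proof -
      have "(fact (b + t + 1) :: real) \<le> fact (b + t + 1 + d)" by (rule fact_mono) simp
      moreover have "(fact (b + t + 1) :: real) = (real b + real t + 1) * fact (b + t)"
        by (simp add: fact_Suc algebra_simps)
      ultimately show ?thesis by linarith
    qed
    have ct: "real c + real t > 0" using cd by simp
    define F :: real where "F = fact (b + t + 1 + d)"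
    have Fp: "F > 0" unfolding F_def by simp
    have "h t = (real c + real t) * (fact (b + t) * fact c / ((real c + real t) * F * fact b)) / K"
      unfolding h_def f_def f1 F_def by simp
    also have "\<dots> = fact (b + t) * fact c / (F * fact b * K)"
      using ct by (rule aux_cancel)
    finally have "h t = fact (b + t) * fact c / (fact (b + t + 1 + d) * fact b * K)"
      unfolding F_def .
    also have "\<dots> \<le> fact (b + t) * fact c / ((real b + real t + 1) * fact (b + t) * fact b * K)"
      using f2 Kpos by (intro divide_left_mono mult_right_mono mult_pos_pos) auto
    also have "\<dots> = C / (real b + real t + 1)" unfolding C_def
      by (rule aux_cancel2) (use Kpos in auto)
    also have "\<dots> \<le> C / (real t + 1)"
      unfolding C_def using Kpos by (intro divide_left_mono) auto
    finally show ?thesis .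
  qed
  have h0: "h t \<ge> 0" for t unfolding h_def using fpos Kpos
    by (intro divide_nonneg_pos mult_nonneg_nonneg) (auto intro: less_imp_le)
  have lim0': "(\<lambda>t. C / (1 + real t)) \<longlonglongrightarrow> 0"
    by (intro tendsto_divide_0[OF tendsto_const] filterlim_at_top_imp_at_infinity
        filterlim_tendsto_add_at_top[OF tendsto_const filterlim_real_sequentially])
  have lim0: "(\<lambda>t. C / (real t + 1)) \<longlonglongrightarrow> 0"
    using lim0' by (simp add: add.commute)
  have hlim: "h \<longlonglongrightarrow> 0"
    by (rule tendsto_sandwich[OF _ _ tendsto_const lim0]) (use h0 hbound in \<open>auto intro: always_eventually\<close>)
  have "(\<lambda>t. h t - h (Suc t)) sums (h 0 - 0)" by (rule telescope_sums'[OF hlim])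
  then have fs: "f sums (real c / K)" using tel unfolding h_def f_def by simp
  have sumeq: "(\<Sum>t. f t) = real c / K" using fs sums_unique by fastforce
  have a_eq: "real c - real b = K + 1" unfolding K_def cd by simp
  have lower: "(real c + 1) / (K + 1) \<le> real c / K"
    using Kpos by (simp add: field_simps K_def cd)
  have epsge: "eps (K + 1) \<ge> 1 / K"
  proof -
    have "ln (K + 1) \<ge> 0" using Kpos by simp
    then have "3 * (1 + ln (K + 1)) / (K + 1) \<ge> 3 / (K + 1)" using Kpos
      by (intro divide_right_mono) auto
    moreover have "3 / (K + 1) \<ge> 1 / K" using Kpos unfolding K_def by (simp add: field_simps)
    moreover have "4 * exp (1/12) * 2 powr (- (K + 1) / 2) \<ge> 0" by simp
    ultimately show ?thesis unfolding eps_def by linarith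
  qed
  have upper: "real c / K \<le> (real c + 1) / (K + 1) * (1 + eps (K + 1))"
  proof -
    have "real c / K - (real c + 1) / (K + 1) = (real c - K) / (K * (K + 1))"
      using Kpos by (simp add: field_simps)
    also have "\<dots> \<le> (real c + 1) / (K * (K + 1))"
      using Kpos by (intro divide_right_mono) auto
    also have "\<dots> = (real c + 1) / (K + 1) * (1 / K)"
      using Kpos by (simp add: field_simps)
    also have "\<dots> \<le> (real c + 1) / (K + 1) * eps (K + 1)"
      using Kpos epsge by (intro mult_left_mono) auto
    finally show ?thesis by (simp add: distrib_left)
  qed
  show ?thesis using fs sumeq lower upper a_eq by (auto simp: sums_summable)
qed

end
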